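(* Let $V$ be a finite-dimensional complex vector space with a Hermitian inner product, $\mathbf G$ a finite group of unitary transformations of $V$, $\mathbf x_0\in V$ a unit vector with full orbit under $\mathbf G$, and consider the subgroup sequence $\{I\}<\mathbf G_1<\mathbf G$ with coset leader sets $\operatorname{CL}(\mathbf G_1/\{I\})=\mathbf G_1$ and $\operatorname{CL}(\mathbf G/\mathbf G_1)$. Then the subgroup decoding algorithm decodes correctly (with some noise) if and only if every element of $\operatorname{CL}(\mathbf G/\mathbf G_1)$ is minimal.
   Context: Full orbit: $|\mathbf G\mathbf x_0|=|\mathbf G|$. $\operatorname{CL}(\mathbf G/\mathbf G_1)$ is a set of representatives of the left cosets of $\mathbf G_1$ in $\mathbf G$ containing $I$. Subgroup decoding algorithm: given $\mathbf r$, choose $d_1\in\mathbf G_1$ minimizing $\|a\mathbf r-\mathbf x_0\|$ over $a\in\mathbf G_1$, then $d_2\in\operatorname{CL}(\mathbf G/\mathbf G_1)$ minimizing $\|a d_1\mathbf r-\mathbf x_0\|$ (ties broken by a fixed ordering); output $d_2d_1$. It decodes correctly with some noise if there is $\delta>0$ such that for all $g\in\mathbf G$ and $\mathbf r$ with $\|\mathbf r-g^{-1}\mathbf x_0\|<\delta$ the output is $g$. For a subgroup $H$, $\operatorname{FR}(H)=\{\mathbf x:\|\mathbf x-\mathbf x_0\|<\|h\mathbf x-\mathbf x_0\|\ \forall h\in H\setminus\operatorname{Stab}_H(\mathbf x_0)\}$. A coset representative $c$ of $\mathbf G_1$ in $\mathbf G$ is minimal if $\mathbf x_0\in c(\operatorname{FR}(\mathbf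 G_1))$. *)

theory Defs
  imports "HOL-Analysis.Analysis"
begin

text \<open>V is modelled as complex^'n (standard Hermitian norm); transformations as
  complex matrices acting by *v.\<close>

type_synonym 'n cmat = "complex ^ 'n ^ 'n"

definition unitary_mat :: "'n::finite cmat \<Rightarrow> bool" where
  "unitary_mat U \<longleftrightarrow> (\<chi> i j. cnj (U $ j $ i)) ** U = mat 1"

definition matrix_group :: "'n::finite cmat set \<Rightarrow> bool" where
  "matrix_group G \<longleftrightarrow> finite G \<and> mat 1 \<in> G \<and> (\<forall>a\<in>G. \<forall>b\<in>G. a ** b \<in> G)
     \<and> (\<forall>a\<in>G. \<exists>b\<in>G. a ** b = mat 1 \<and> b ** a = mat 1)"

definition full_orbit :: "'n::finite cmat set \<Rightarrow> complex ^ 'n \<Rightarrow> bool" where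
  "full_orbit G x0 \<longleftrightarrow> card ((\<lambda>g. g *v x0) ` G) = card G"

definition left_coset :: "'n::finite cmat \<Rightarrow> 'n cmat set \<Rightarrow> 'n cmat set" where
  "left_coset g H = (\<lambda>h. g ** h) ` H"

definition coset_leaders :: "'n::finite cmat set \<Rightarrow> 'n cmat set \<Rightarrow> 'n cmat set \<Rightarrow> bool" where
  "coset_leaders G H C \<longleftrightarrow> C \<subseteq> G \<and> mat 1 \<in> C \<and> (\<forall>g\<in>G. \<exists>!c. c \<in> C \<and> c \<in> left_coset g H)"

text \<open>Minimizer of f over S, ties broken by the fixed ranking rk (assumed injective).\<close>
definition argmin_tb :: "('a \<Rightarrow> nat) \<Rightarrow> 'a set \<Rightarrow> ('a \<Rightarrow> real) \<Rightarrow> 'a" where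
  "argmin_tb rk S f = (THE a. a \<in> S \<and> (\<forall>b\<in>S. f a < f b \<or> (f a = f b \<and> rk a \<le> rk b)))"

definition subgroup_decode ::
  "('n::finite cmat \<Rightarrow> nat) \<Rightarrow> 'n cmat set \<Rightarrow> 'n cmat set \<Rightarrow> complex ^ 'n \<Rightarrow> complex ^ 'n \<Rightarrow> 'n cmat" where
  "subgroup_decode rk G1 C x0 r =
     (let d1 = argmin_tb rk G1 (\<lambda>a. norm (a *v r - x0));
          d2 = argmin_tb rk C (\<lambda>a. norm ((a ** d1) *v r - x0))
      in d2 ** d1)"

definition decodes_correctly ::
  "('n::finite cmat \<Rightarrow> nat) \<Rightarrow> 'n cmat set \<Rightarrow> 'n cmat set \<Rightarrow> 'n cmat set \<Rightarrow> complex ^ 'n \<Rightarrow> bool" where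
  "decodes_correctly rk G G1 C x0 \<longleftrightarrow>
     (\<exists>\<delta>>0. \<forall>g\<in>G. \<forall>r. norm (r - matrix_inv g *v x0) < \<delta> \<longrightarrow> subgroup_decode rk G1 C x0 r = g)"

definition Stab :: "'n::finite cmat set \<Rightarrow> complex ^ 'n \<Rightarrow> 'n cmat set" where
  "Stab H x0 = {h \<in> H. h *v x0 = x0}"

definition FR :: "'n::finite cmat set \<Rightarrow> complex ^ 'n \<Rightarrow> (complex ^ 'n) set" where
  "FR H x0 = {x. \<forall>h \<in> H - Stab H x0. norm (x - x0) < norm (h *v x - x0)}"

definition minimal_rep :: "'n::finite cmat set \<Rightarrow> complex ^ 'n \<Rightarrow> 'n cmat \<Rightarrow> bool" where
  "minimal_rep G1 x0 c \<longleftrightarrow> x0 \<in> (\<lambda>x. c *v x) ` FR G1 x0"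

end

theory Submission
  imports Defs
begin

lemma key_ineq:
  fixes p u :: "'a::real_inner"
  assumes "norm (p - u) \<le> norm p" "u \<noteq> 0" "t > 0"
  shows "norm (p - (1-t) *\<^sub>R u) < norm (p + t *\<^sub>R u)"
proof -
  have sq: "norm (p + s *\<^sub>R u) ^2 = inner p p + 2 * s * inner p u + s^2 * inner u u" for s
    unfolding power2_norm_eq_inner
    by (simp add: inner_add_left inner_add_right inner_commute power2_eq_square algebra_simps)
  have "(norm (p - u))^2 \<le> (norm p)^2" using assms(1) by (simp add: power_mono)
  moreover have "norm (p - u)^2 = inner p p - 2 * inner p u + inner u u"
    using sq[of "-1"] by simp
  moreover have "norm p ^2 = inner p p" by (simp add: power2_norm_eq_inner)
  ultimately have a: "inner u u \<le> 2 * inner p u" by linarith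
  have U: "inner u u > 0" using assms(2) by simp
  have e: "p - (1-t) *\<^sub>R u = p + (t - 1) *\<^sub>R u" by (simp add: algebra_simps)
  have "(norm (p - (1-t) *\<^sub>R u))^2 < (norm (p + t *\<^sub>R u))^2"
    unfolding e sq
  proof -
    have "(t-1)^2 * inner u u - t^2 * inner u u = (1 - 2*t) * inner u u" by (simp add: power2_eq_square algebra_simps)
    moreover have "t * inner u u > 0" using U assms(3) by simp
    ultimately show "inner p p + 2 * (t - 1) * inner p u + (t - 1)\<^sup>2 * inner u u
      < inner p p + 2 * t * inner p u + t\<^sup>2 * inner u u" using a by (simp add: algebra_simps)
  qed
  thus ?thesis by (simp add: power_less_imp_less_base)
qed

lemma unitary_herm:
  fixes U :: "'n::finite cmat"
  assumes "unitary_mat U"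
  shows "(\<Sum>i\<in>UNIV. cnj ((U *v x)$i) * (U *v x)$i) = (\<Sum>j\<in>UNIV. cnj (x$j) * x$j)"
proof -
  have E: "(\<Sum>i\<in>UNIV. cnj (U$i$j) * U$i$k) = (if j = k then 1 else 0)" for j k
  proof -
    have "((\<chi> i j. cnj (U $ j $ i)) ** U) $ j $ k = mat 1 $ j $ k" using assms unitary_mat_def by metis
    thus ?thesis by (simp add: matrix_matrix_mult_def mat_def)
  qed
  have s1: "cnj ((U *v x)$i) * (U *v x)$i = (\<Sum>j\<in>UNIV. \<Sum>k\<in>UNIV. cnj (x$j) * x$k * (cnj (U$i$j) * U$i$k))" for i
  proof -
    have "cnj ((U *v x)$i) * (U *v x)$i = (\<Sum>j\<in>UNIV. cnj (U$i$j) * cnj (x$j)) * (\<Sum>k\<in>UNIV. U$i$k * x$k)"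
      by (simp add: matrix_vector_mult_def cnj_sum)
    also have "\<dots> = (\<Sum>j\<in>UNIV. \<Sum>k\<in>UNIV. (cnj (U$i$j) * cnj (x$j)) * (U$i$k * x$k))"
      by (rule sum_product)
    also have "\<dots> = (\<Sum>j\<in>UNIV. \<Sum>k\<in>UNIV. cnj (x$j) * x$k * (cnj (U$i$j) * U$i$k))"
      by (intro sum.cong refl) (simp add: mult_ac)
    finally show ?thesis .
  qed
  have "(\<Sum>i\<in>UNIV. cnj ((U *v x)$i) * (U *v x)$i)
      = (\<Sum>i\<in>UNIV. \<Sum>j\<in>UNIV. \<Sum>k\<in>UNIV. cnj (x$j) * x$k * (cnj (U$i$j) * U$i$k))"
    by (simp only: s1)
  also have "\<dots> = (\<Sum>j\<in>UNIV. \<Sum>i\<in>UNIV. \<Sum>k\<in>UNIV. cnj (x$j) * x$k * (cnj (U$i$j) * U$i$k))"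
    by (rule sum.swap)
  also have "\<dots> = (\<Sum>j\<in>UNIV. \<Sum>k\<in>UNIV. \<Sum>i\<in>UNIV. cnj (x$j) * x$k * (cnj (U$i$j) * U$i$k))"
    by (intro sum.cong refl sum.swap)
  also have "\<dots> = (\<Sum>j\<in>UNIV. \<Sum>k\<in>UNIV. cnj (x$j) * x$k * (\<Sum>i\<in>UNIV. cnj (U$i$j) * U$i$k))"
    by (simp only: sum_distrib_left)
  also have "\<dots> = (\<Sum>j\<in>UNIV. \<Sum>k\<in>UNIV. cnj (x$j) * x$k * (if j = k then 1 else 0))"
    by (simp only: E)
  also have "\<dots> = (\<Sum>j\<in>UNIV. cnj (x$j) * x$j)"
    by (simp add: if_distrib cong: if_cong)
  finally show ?thesis .
qed

lemma inner_cvec: "inner (x::complex^'n) y = Re (\<Sum>i\<in>UNIV. cnj (x$i) * y$i)"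
  by (simp add: inner_vec_def inner_complex_def)

lemma unitary_norm:
  assumes "unitary_mat (U::'n::finite cmat)"
  shows "norm (U *v x) = norm x"
proof -
  have "inner (U *v x) (U *v x) = inner x x"
    by (simp only: inner_cvec unitary_herm[OF assms])
  thus ?thesis by (metis norm_eq_sqrt_inner)
qed


lemma ginv:
  assumes "matrix_group G" "a \<in> G"
  shows "matrix_inv a \<in> G \<and> a ** matrix_inv a = mat 1 \<and> matrix_inv a ** a = mat 1"
proof -
  obtain b where b: "b \<in> G" "a ** b = mat 1" "b ** a = mat 1"
    using assms unfolding matrix_group_def by blast
  have P: "a ** matrix_inv a = mat 1 \<and> matrix_inv a ** a = mat 1"
    unfolding matrix_inv_def by (rule someI[of _ b]) (use b in auto)
  have "matrix_inv a = mat 1 ** matrix_inv a" by (simp add: matrix_mul_lid)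
  also have "\<dots> = b ** (a ** matrix_inv a)" by (simp add: b(3) matrix_mul_assoc)
  also have "\<dots> = b" using P by (simp add: matrix_mul_rid)
  finally show ?thesis using P b by simp
qed

lemma argmin_eq:
  assumes "a \<in> S" "\<forall>b\<in>S. b \<noteq> a \<longrightarrow> f a < f b"
  shows "argmin_tb rk S f = a"
  unfolding argmin_tb_def
proof (rule the_equality)
  show "a \<in> S \<and> (\<forall>b\<in>S. f a < f b \<or> f a = f b \<and> rk a \<le> rk b)"
    using assms by auto
next
  fix a' assume "a' \<in> S \<and> (\<forall>b\<in>S. f a' < f b \<or> f a' = f b \<and> rk a' \<le> rk b)"
  thus "a' = a" using assms by (metis less_asym order_less_irrefl)
qed

lemma argmin_in:
  assumes "finite S" "S \<noteq> {}" "inj_on rk S"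
  shows "argmin_tb rk S f \<in> S \<and> (\<forall>b\<in>S. f (argmin_tb rk S f) \<le> f b)"
proof -
  let ?P = "\<lambda>a. a \<in> S \<and> (\<forall>b\<in>S. f a < f b \<or> (f a = f b \<and> rk a \<le> rk b))"
  define m where "m = Min (f ` S)"
  define M where "M = {a\<in>S. f a = m}"
  have m: "m \<in> f ` S" "\<forall>b\<in>S. m \<le> f b" using assms unfolding m_def by auto
  have M: "finite M" "M \<noteq> {}" using m assms unfolding M_def by auto
  obtain a where a: "a \<in> M" "rk a = Min (rk ` M)"
    using M by (metis (no_types, lifting) Min_in finite_imageI image_iff image_is_empty)
  have "?P a"
  proof -
    have "a \<in> S" "f a = m" using a M_def by auto
    moreover have "\<forall>b\<in>S. f a < f b \<or> (f a = f b \<and> rk a \<le> rk b)"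
    proof
      fix b assume b: "b \<in> S"
      show "f a < f b \<or> (f a = f b \<and> rk a \<le> rk b)"
      proof (cases "f b = m")
        case True
        hence "b \<in> M" using b M_def by auto
        hence "rk a \<le> rk b" using a M by simp
        thus ?thesis using True \<open>f a = m\<close> by simp
      next
        case False thus ?thesis using m b \<open>f a = m\<close> by force
      qed
    qed
    ultimately show ?thesis by simp
  qed
  moreover have "\<And>a'. ?P a' \<Longrightarrow> a' = a"
  proof -
    fix a' assume a': "?P a'"
    have "f a' = f a \<and> rk a' = rk a" using a' \<open>?P a\<close>
      by (metis antisym less_asym order_less_irrefl)
    thus "a' = a" using a' \<open>?P a\<close> assms(3) by (meson inj_on_def)
  qed
  ultimately have "?P (argmin_tb rk S f)" unfolding argmin_tb_def by (rule theI)
  thus ?thesis by force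
qed

lemma pos_lower:
  fixes \<phi> :: "'a \<Rightarrow> real"
  assumes "finite S" "\<forall>a\<in>S. 0 < \<phi> a"
  shows "\<exists>e>0. \<forall>a\<in>S. e \<le> \<phi> a"
proof (cases "S = {}")
  case True thus ?thesis by (intro exI[of _ 1]) auto
next
  case False
  thus ?thesis using assms by (intro exI[of _ "Min (\<phi> ` S)"]) auto
qed


lemma lip:
  assumes "unitary_mat (a::'n::finite cmat)"
  shows "\<bar>norm (a *v r - x0) - norm (a *v y - x0)\<bar> \<le> norm (r - y)"
proof -
  have "\<bar>norm (a *v r - x0) - norm (a *v y - x0)\<bar> \<le> norm ((a *v r - x0) - (a *v y - x0))"
    by (rule norm_triangle_ineq3)
  also have "(a *v r - x0) - (a *v y - x0) = a *v (r - y)" by (simp add: matrix_vector_mult_diff_distrib)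
  finally show ?thesis using unitary_norm[OF assms] by simp
qed

theorem mainTheorem11:
  fixes G G1 C :: "'n::finite cmat set" and x0 :: "complex ^ 'n" and rk :: "'n cmat \<Rightarrow> nat"
  assumes "matrix_group G" and "\<forall>g\<in>G. unitary_mat g"
    and "norm x0 = 1" and "full_orbit G x0"
    and "matrix_group G1" and "G1 \<subseteq> G"
    and "coset_leaders G G1 C"
    and "inj_on rk G"
  shows "decodes_correctly rk G G1 C x0 \<longleftrightarrow> (\<forall>c\<in>C. minimal_rep G1 x0 c)"
proof -
  note GG = assms(1) and G1G = assms(5)
  have finG: "finite G" and IG: "mat 1 \<in> G" and mulG: "\<And>a b. a \<in> G \<Longrightarrow> b \<in> G \<Longrightarrow> a ** b \<in> G"
    using GG unfolding matrix_group_def by auto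
  have finG1: "finite G1" and IG1: "mat 1 \<in> G1" and mulG1: "\<And>a b. a \<in> G1 \<Longrightarrow> b \<in> G1 \<Longrightarrow> a ** b \<in> G1"
    using G1G unfolding matrix_group_def by auto
  have sub: "G1 \<subseteq> G" by fact
  have CG: "C \<subseteq> G" and IC: "mat 1 \<in> C"
    and CU: "\<And>g. g \<in> G \<Longrightarrow> \<exists>!c. c \<in> C \<and> c \<in> left_coset g G1"
    using assms(7) unfolding coset_leaders_def by auto
  have finC: "finite C" using CG finG finite_subset by blast
  have inj: "inj_on (\<lambda>g. g *v x0) G"
    using assms(4) finG unfolding full_orbit_def by (simp add: eq_card_imp_inj_on)
  have unit: "\<And>a. a \<in> G \<Longrightarrow> unitary_mat a" using assms(2) by blast
  have injrk1: "inj_on rk G1" using assms(8) sub inj_on_subset by blast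
  have injrkC: "inj_on rk C" using assms(8) CG inj_on_subset by blast
  have fix1: "\<And>a. a \<in> G \<Longrightarrow> a *v x0 = x0 \<Longrightarrow> a = mat 1"
    using inj IG by (metis (no_types, lifting) inj_on_def matrix_vector_mul_lid)
  have cancel: "\<And>a b c. c \<in> G \<Longrightarrow> c ** a = c ** b \<Longrightarrow> a = b"
  proof -
    fix a b c assume c: "c \<in> G" "c ** a = c ** b"
    have "a = (matrix_inv c ** c) ** a" using ginv[OF GG c(1)] by (simp add: matrix_mul_lid)
    also have "\<dots> = (matrix_inv c ** c) ** b" using c(2) by (metis matrix_mul_assoc)
    also have "\<dots> = b" using ginv[OF GG c(1)] by (simp add: matrix_mul_lid)
    finally show "a = b" .
  qed
  show ?thesis
  proof
    assume dc: "decodes_correctly rk G G1 C x0"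
    then obtain \<delta> where dpos: "\<delta> > 0" and dec:
      "\<forall>g\<in>G. \<forall>r. norm (r - matrix_inv g *v x0) < \<delta> \<longrightarrow> subgroup_decode rk G1 C x0 r = g"
      unfolding decodes_correctly_def by blast
    show "\<forall>c\<in>C. minimal_rep G1 x0 c"
    proof
      fix c assume cC: "c \<in> C"
      hence cG: "c \<in> G" using CG by blast
      note ic = ginv[OF GG cG]
      define z0 where "z0 = matrix_inv c *v x0"
      have cz0: "c *v z0 = x0" unfolding z0_def using ic
        by (simp add: matrix_vector_mul_assoc matrix_vector_mul_lid)
      have "z0 \<in> FR G1 x0"
      proof (rule ccontr)
        assume "z0 \<notin> FR G1 x0"
        then obtain b where bG1: "b \<in> G1" and bS: "b \<notin> Stab G1 x0"
          and le: "\<not> norm (z0 - x0) < norm (b *v z0 - x0)"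
          unfolding FR_def by blast
        have bG: "b \<in> G" using bG1 sub by blast
        note ib = ginv[OF GG bG]
        have bx: "b *v x0 \<noteq> x0" using bS bG1 unfolding Stab_def by blast
        define w where "w = matrix_inv b *v x0"
        have bw: "b *v w = x0" unfolding w_def using ib
          by (simp add: matrix_vector_mul_assoc matrix_vector_mul_lid)
        define u where "u = w - x0"
        have u0: "u \<noteq> 0" using bw bx unfolding u_def by auto
        have nb: "\<And>y. norm (b *v y - x0) = norm (y - w)"
          using unitary_norm[OF unit[OF bG]] bw by (metis matrix_vector_mult_diff_distrib)
        define t where "t = \<delta> / (2 * norm u)"
        have tpos: "t > 0" using dpos u0 unfolding t_def by simp
        define y where "y = z0 + t *\<^sub>R u"
        have "norm (y - z0) = \<delta> / 2" using u0 dpos unfolding y_def t_def by simp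
        hence close: "norm (y - matrix_inv c *v x0) < \<delta>" using dpos unfolding z0_def by simp
        have ki: "norm ((z0 - x0) - (1 - t) *\<^sub>R u) < norm ((z0 - x0) + t *\<^sub>R u)"
        proof (rule key_ineq[OF _ u0 tpos])
          show "norm (z0 - x0 - u) \<le> norm (z0 - x0)"
            using le nb[of z0] unfolding u_def by (simp add: algebra_simps)
        qed
        have e1: "(z0 - x0) - (1 - t) *\<^sub>R u = y - w" unfolding y_def u_def by (simp add: algebra_simps)
        have e2: "(z0 - x0) + t *\<^sub>R u = y - x0" unfolding y_def by (simp add: algebra_simps)
        have better: "norm (b *v y - x0) < norm (mat 1 *v y - x0)"
          using ki e1 e2 nb[of y] by (simp add: matrix_vector_mul_lid)
        define d1 where "d1 = argmin_tb rk G1 (\<lambda>a. norm (a *v y - x0))"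
        define d2 where "d2 = argmin_tb rk C (\<lambda>a. norm ((a ** d1) *v y - x0))"
        have d1: "d1 \<in> G1" "norm (d1 *v y - x0) \<le> norm (b *v y - x0)"
          using argmin_in[OF finG1 _ injrk1, of "\<lambda>a. norm (a *v y - x0)"] IG1 bG1
          unfolding d1_def by auto
        have d1I: "d1 \<noteq> mat 1" using d1 better by auto
        have d2C: "d2 \<in> C" using argmin_in[OF finC _ injrkC] IC unfolding d2_def by blast
        have "subgroup_decode rk G1 C x0 y = c" using dec cG close by blast
        hence out: "d2 ** d1 = c" unfolding subgroup_decode_def d1_def d2_def Let_def by simp
        have d1G: "d1 \<in> G" using d1 sub by blast
        note id1 = ginv[OF G1G d1(1)]
        have d2eq: "d2 = c ** matrix_inv d1"
        proof -
          have "d2 = d2 ** (d1 ** matrix_inv d1)" using id1 by (simp add: matrix_mul_rid)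
          also have "\<dots> = c ** matrix_inv d1" using out by (simp add: matrix_mul_assoc)
          finally show ?thesis .
        qed
        have "d2 \<in> left_coset c G1" unfolding left_coset_def d2eq using id1 by blast
        moreover have "c \<in> left_coset c G1" unfolding left_coset_def using IG1
          by (metis image_eqI matrix_mul_rid)
        ultimately have "d2 = c" using CU[OF cG] d2C cC by blast
        hence "c ** d1 = c ** mat 1" using out by (simp add: matrix_mul_rid)
        hence "d1 = mat 1" using cancel cG by blast
        thus False using d1I by simp
      qed
      thus "minimal_rep G1 x0 c" unfolding minimal_rep_def using cz0 by force
    qed
  next
    assume allmin: "\<forall>c\<in>C. minimal_rep G1 x0 c"
    have each: "\<forall>g\<in>G. \<exists>\<delta>>0. \<forall>r. norm (r - matrix_inv g *v x0) < \<delta> \<longrightarrow> subgroup_decode rk G1 C x0 r = g"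
    proof
      fix g assume gG: "g \<in> G"
      obtain c where cC: "c \<in> C" and ccos: "c \<in> left_coset g G1" using CU[OF gG] by blast
      obtain h' where h': "h' \<in> G1" "c = g ** h'" using ccos unfolding left_coset_def by blast
      note ih' = ginv[OF G1G h'(1)]
      define h where "h = matrix_inv h'"
      have hG1: "h \<in> G1" using ih' h_def by simp
      have hG: "h \<in> G" using hG1 sub by blast
      have cG: "c \<in> G" using cC CG by blast
      note ic = ginv[OF GG cG] and ig = ginv[OF GG gG] and ih = ginv[OF GG hG]
      have gch: "g = c ** h"
        using ih' unfolding h'(2) h_def by (metis matrix_mul_assoc matrix_mul_rid)
      define y0 where "y0 = matrix_inv g *v x0"
      define z0 where "z0 = matrix_inv c *v x0"
      have hic: "h ** matrix_inv g = matrix_inv c"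
      proof -
        have "h = matrix_inv c ** g" using ic unfolding gch by (metis matrix_mul_assoc matrix_mul_lid)
        hence "h ** matrix_inv g = matrix_inv c ** (g ** matrix_inv g)" by (metis matrix_mul_assoc)
        thus ?thesis using ig by (simp add: matrix_mul_rid)
      qed
      have hy0: "h *v y0 = z0" unfolding y0_def z0_def using hic by (simp add: matrix_vector_mul_assoc)
      have cz0: "c *v z0 = x0" unfolding z0_def using ic
        by (simp add: matrix_vector_mul_assoc matrix_vector_mul_lid)
      obtain x where x: "x \<in> FR G1 x0" "x0 = c *v x" using allmin cC unfolding minimal_rep_def by blast
      have "x = z0" unfolding z0_def x(2) using ic by (simp add: matrix_vector_mul_assoc matrix_vector_mul_lid)
      hence z0FR: "z0 \<in> FR G1 x0" using x by simp
      have gap1: "\<forall>a\<in>G1 - {h}. 0 < norm (a *v y0 - x0) - norm (h *v y0 - x0)"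
      proof
        fix a assume a: "a \<in> G1 - {h}"
        define b where "b = a ** matrix_inv h"
        have bG1: "b \<in> G1" using a ginv[OF G1G hG1] mulG1 b_def by blast
        have "b \<noteq> mat 1"
        proof
          assume "b = mat 1"
          hence "a = mat 1 ** h" using ih unfolding b_def
            by (metis matrix_mul_assoc matrix_mul_rid)
          thus False using a by (simp add: matrix_mul_lid)
        qed
        hence "b \<notin> Stab G1 x0" using fix1 bG1 sub unfolding Stab_def by blast
        hence "norm (z0 - x0) < norm (b *v z0 - x0)" using z0FR bG1 unfolding FR_def by blast
        moreover have "b *v z0 = a *v y0" unfolding b_def hy0[symmetric] using ih
          by (simp add: matrix_vector_mul_assoc) (metis matrix_mul_assoc matrix_mul_rid)
        ultimately show "0 < norm (a *v y0 - x0) - norm (h *v y0 - x0)" using hy0 by simp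
      qed
      have gap2: "\<forall>a\<in>C - {c}. 0 < norm ((a ** h) *v y0 - x0)"
      proof
        fix a assume a: "a \<in> C - {c}"
        have aG: "a \<in> G" using a CG by blast
        have "a *v z0 \<noteq> x0"
        proof
          assume "a *v z0 = x0"
          hence "(a ** matrix_inv c) *v x0 = x0" unfolding z0_def by (simp add: matrix_vector_mul_assoc)
          hence "a ** matrix_inv c = mat 1" using fix1 mulG aG ic by blast
          hence "a = c" using ic by (metis matrix_mul_assoc matrix_mul_lid matrix_mul_rid)
          thus False using a by simp
        qed
        thus "0 < norm ((a ** h) *v y0 - x0)" using hy0
          by (simp add: matrix_vector_mul_assoc[symmetric])
      qed
      have c0: "(c ** h) *v y0 = x0" using hy0 cz0 by (simp add: matrix_vector_mul_assoc[symmetric])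
      obtain e1 where e1: "e1 > 0" "\<forall>a\<in>G1 - {h}. e1 \<le> norm (a *v y0 - x0) - norm (h *v y0 - x0)"
        using pos_lower[OF _ gap1] finG1 by blast
      obtain e2 where e2: "e2 > 0" "\<forall>a\<in>C - {c}. e2 \<le> norm ((a ** h) *v y0 - x0)"
        using pos_lower[OF _ gap2] finC by blast
      define \<delta> where "\<delta> = min e1 e2 / 2"
      have dpos: "\<delta> > 0" using e1 e2 unfolding \<delta>_def by simp
      show "\<exists>\<delta>>0. \<forall>r. norm (r - matrix_inv g *v x0) < \<delta> \<longrightarrow> subgroup_decode rk G1 C x0 r = g"
      proof (intro exI[of _ \<delta>] conjI allI impI dpos)
        fix r assume "norm (r - matrix_inv g *v x0) < \<delta>"
        hence rc: "norm (r - y0) < \<delta>" unfolding y0_def .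
        have L: "\<And>a. a \<in> G \<Longrightarrow> \<bar>norm (a *v r - x0) - norm (a *v y0 - x0)\<bar> \<le> norm (r - y0)"
          using lip unit by blast
        have d1: "argmin_tb rk G1 (\<lambda>a. norm (a *v r - x0)) = h"
        proof (rule argmin_eq[OF hG1], intro ballI impI)
          fix a assume a: "a \<in> G1" "a \<noteq> h"
          have "e1 \<le> norm (a *v y0 - x0) - norm (h *v y0 - x0)" using e1 a by blast
          moreover have "\<bar>norm (a *v r - x0) - norm (a *v y0 - x0)\<bar> \<le> norm (r - y0)" using L a sub by blast
          moreover have "\<bar>norm (h *v r - x0) - norm (h *v y0 - x0)\<bar> \<le> norm (r - y0)" using L hG by blast
          moreover have "2 * \<delta> \<le> e1" unfolding \<delta>_def by simp
          ultimately show "norm (h *v r - x0) < norm (a *v r - x0)" using rc by linarith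
        qed
        have d2: "argmin_tb rk C (\<lambda>a. norm ((a ** h) *v r - x0)) = c"
        proof (rule argmin_eq[OF cC], intro ballI impI)
          fix a assume a: "a \<in> C" "a \<noteq> c"
          have "e2 \<le> norm ((a ** h) *v y0 - x0)" using e2 a by blast
          moreover have "\<bar>norm ((a ** h) *v r - x0) - norm ((a ** h) *v y0 - x0)\<bar> \<le> norm (r - y0)"
            using L a CG hG mulG by blast
          moreover have "\<bar>norm ((c ** h) *v r - x0) - norm ((c ** h) *v y0 - x0)\<bar> \<le> norm (r - y0)"
            using L cG hG mulG by blast
          moreover have "2 * \<delta> \<le> e2" unfolding \<delta>_def by simp
          ultimately show "norm ((c ** h) *v r - x0) < norm ((a ** h) *v r - x0)" using rc c0 by simp
        qed
        show "subgroup_decode rk G1 C x0 r = g"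
          unfolding subgroup_decode_def Let_def d1 d2 gch ..
      qed
    qed
    then obtain D where D: "\<forall>g\<in>G. D g > 0 \<and> (\<forall>r. norm (r - matrix_inv g *v x0) < D g \<longrightarrow> subgroup_decode rk G1 C x0 r = g)"
      by metis
    obtain e where e: "e > 0" "\<forall>g\<in>G. e \<le> D g" using pos_lower[OF finG, of D] D by blast
    show "decodes_correctly rk G G1 C x0"
      unfolding decodes_correctly_def
    proof (intro exI[of _ e] conjI ballI allI impI e(1))
      fix g r assume "g \<in> G" "norm (r - matrix_inv g *v x0) < e"
      thus "subgroup_decode rk G1 C x0 r = g" using D e by fastforce
    qed
  qed
qed

end
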